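(* Let $F_1,F_2\in\mathbb{R}^{p\times n}$ and $L_1,L_2\in\mathbb{R}^{n\times m}$ be arbitrary and $s\ge1$. Define the block lower-triangular Toeplitz matrices $R_{s+n}\in\mathbb{R}^{(s+n)m\times(s+n)m}$ and $\bar R_{s+n}\in\mathbb{R}^{(s+n)p\times(s+n)m}$ with $(i,j)$ blocks $R_{i-j}$ and $\bar R_{i-j}$, where $R_k=CA_{L_2}^{k-1}(L_1-L_2)$ for $k\ge1$, $R_0=I_m$, $R_k=0$ for $k<0$, with $A_{L_2}=A-L_2C$, and $\bar R_k=(F_1-F_2)A_{F_1}^{k-1}L_1+F_2A_{L_2}^{k-1}(L_1-L_2)$ for $k\ge1$, $\bar R_k=0$ for $k\le 0$. Then $$\begin{bmatrix}\hat Y_s(F_1,L_1)\\ \hat X_s(F_1,L_1)\end{bmatrix}=\begin{bmatrix}M_s(F_2) & \hat Y_s(F_2,L_2)\\ N_s(F_2) & \hat X_s(F_2,L_2)\end{bmatrix}\begin{bmatrix}\bar R_{s+n}\\ R_{s+n}\end{bmatrix}.$$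
   Context: Consider the discrete-time LTI system $x(k+1)=Ax(k)+Bu(k)$, $y(k)=Cx(k)+Du(k)$ with $u\in\mathbb{R}^p$, $x\in\mathbb{R}^n$, $y\in\mathbb{R}^m$, $n\ge 1$, and $(A,B,C,D)$ a minimal realization. For $F\in\mathbb{R}^{p\times n}$ put $A_F=A+BF$ and $C_F=C+DF$. Finite-sample image representation: $M_s(F)\in\mathbb{R}^{sp\times(s+n)p}$, $N_s(F)\in\mathbb{R}^{sm\times(s+n)p}$ with $(l,j)$ blocks ($l=1,\dots,s$; $j=1,\dots,s+n$) $M_{n+l-j}$, $N_{n+l-j}$, where $M_k=FA_F^{k-1}B$ ($k\ge1$), $M_0=I_p$, $M_k=0$ ($k<0$), $N_k=C_FA_F^{k-1}B$ ($k\ge1$), $N_0=D$, $N_k=0$ ($k<0$). For gains $F,L$: $\hat Y_s(F,L)\in\mathbb{R}^{sp\times(s+n)m}$, $\hat X_s(F,L)\in\mathbb{R}^{sm\times(s+n)m}$ with $(l,j)$ blocks ($l=1,\dots,s$; $j=1,\dots,s+n$) $\hat Y_{n+l-j}$, $\hat X_{n+l-j}$, where $\hat Y_k=FA_F^{k-1}L$ ($k\ge1$), $\hat Y_k=0$ ($k\le0$), $\hat X_k=C_FA_F^{k-1}L$ ($k\ge1$), $\hat X_0=I_m$, $\hat X_k=0$ ($k<0$). *)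

theory Defs
  imports "Jordan_Normal_Form.Matrix" "Jordan_Normal_Form.DL_Rank"
begin

definition blk_toeplitz :: "nat \<Rightarrow> nat \<Rightarrow> int \<Rightarrow> nat \<Rightarrow> nat \<Rightarrow> (int \<Rightarrow> real mat) \<Rightarrow> real mat" where
  "blk_toeplitz nr nc off r c f =
     mat (nr * r) (nc * c)
       (\<lambda>(i, j). f (off + int (i div r) - int (j div c)) $$ (i mod r, j mod c))"

(* vertical stacking [P; Q] *)
definition vstack :: "real mat \<Rightarrow> real mat \<Rightarrow> real mat" where
  "vstack P Q = four_block_mat P (0\<^sub>m (dim_row P) 0) Q (0\<^sub>m (dim_row Q) 0)"

(* Controllability matrix [B, AB, ..., A^(n-1) B] (n x np) *)
definition ctrb_mat :: "nat \<Rightarrow> nat \<Rightarrow> real mat \<Rightarrow> real mat \<Rightarrow> real mat" where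
  "ctrb_mat n p A B = mat n (n * p) (\<lambda>(i, j). (A ^\<^sub>m (j div p) * B) $$ (i, j mod p))"

(* Observability matrix [C; CA; ...; C A^(n-1)] (nm x n) *)
definition obsv_mat :: "nat \<Rightarrow> nat \<Rightarrow> real mat \<Rightarrow> real mat \<Rightarrow> real mat" where
  "obsv_mat n m A C = mat (n * m) n (\<lambda>(i, j). (C * A ^\<^sub>m (i div m)) $$ (i mod m, j))"

definition controllable :: "nat \<Rightarrow> nat \<Rightarrow> real mat \<Rightarrow> real mat \<Rightarrow> bool" where
  "controllable n p A B \<longleftrightarrow> vec_space.rank n (ctrb_mat n p A B) = n"

definition observable :: "nat \<Rightarrow> nat \<Rightarrow> real mat \<Rightarrow> real mat \<Rightarrow> bool" where
  "observable n m A C \<longleftrightarrow> vec_space.rank n (transpose_mat (obsv_mat n m A C)) = n"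

definition minimal_realization ::
  "nat \<Rightarrow> nat \<Rightarrow> nat \<Rightarrow> real mat \<Rightarrow> real mat \<Rightarrow> real mat \<Rightarrow> real mat \<Rightarrow> bool" where
  "minimal_realization n p m A B C D \<longleftrightarrow>
     A \<in> carrier_mat n n \<and> B \<in> carrier_mat n p \<and> C \<in> carrier_mat m n \<and> D \<in> carrier_mat m p \<and>
     controllable n p A B \<and> observable n m A C"

definition AF :: "real mat \<Rightarrow> real mat \<Rightarrow> real mat \<Rightarrow> real mat" where
  "AF A B F = A + B * F"
definition CF :: "real mat \<Rightarrow> real mat \<Rightarrow> real mat \<Rightarrow> real mat" where
  "CF C D F = C + D * F"

definition Mk :: "nat \<Rightarrow> real mat \<Rightarrow> real mat \<Rightarrow> real mat \<Rightarrow> int \<Rightarrow> real mat" where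
  "Mk p A B F k = (if k \<ge> 1 then F * AF A B F ^\<^sub>m nat (k - 1) * B
                   else if k = 0 then 1\<^sub>m p else 0\<^sub>m p p)"
definition Nk :: "nat \<Rightarrow> nat \<Rightarrow> real mat \<Rightarrow> real mat \<Rightarrow> real mat \<Rightarrow> real mat \<Rightarrow> real mat \<Rightarrow> int \<Rightarrow> real mat" where
  "Nk m p A B C D F k = (if k \<ge> 1 then CF C D F * AF A B F ^\<^sub>m nat (k - 1) * B
                         else if k = 0 then D else 0\<^sub>m m p)"
definition Yhk :: "nat \<Rightarrow> nat \<Rightarrow> real mat \<Rightarrow> real mat \<Rightarrow> real mat \<Rightarrow> real mat \<Rightarrow> int \<Rightarrow> real mat" where
  "Yhk m p A B F L k = (if k \<ge> 1 then F * AF A B F ^\<^sub>m nat (k - 1) * L else 0\<^sub>m p m)"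
definition Xhk :: "nat \<Rightarrow> real mat \<Rightarrow> real mat \<Rightarrow> real mat \<Rightarrow> real mat \<Rightarrow> real mat \<Rightarrow> real mat \<Rightarrow> int \<Rightarrow> real mat" where
  "Xhk m A B C D F L k = (if k \<ge> 1 then CF C D F * AF A B F ^\<^sub>m nat (k - 1) * L
                          else if k = 0 then 1\<^sub>m m else 0\<^sub>m m m)"

definition Ms :: "nat \<Rightarrow> nat \<Rightarrow> nat \<Rightarrow> real mat \<Rightarrow> real mat \<Rightarrow> real mat \<Rightarrow> real mat" where
  "Ms n p s A B F = blk_toeplitz s (s + n) (int n) p p (Mk p A B F)"
definition Ns :: "nat \<Rightarrow> nat \<Rightarrow> nat \<Rightarrow> nat \<Rightarrow> real mat \<Rightarrow> real mat \<Rightarrow> real mat \<Rightarrow> real mat \<Rightarrow> real mat \<Rightarrow> real mat" where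
  "Ns n m p s A B C D F = blk_toeplitz s (s + n) (int n) m p (Nk m p A B C D F)"
definition Yhat :: "nat \<Rightarrow> nat \<Rightarrow> nat \<Rightarrow> nat \<Rightarrow> real mat \<Rightarrow> real mat \<Rightarrow> real mat \<Rightarrow> real mat \<Rightarrow> real mat" where
  "Yhat n m p s A B F L = blk_toeplitz s (s + n) (int n) p m (Yhk m p A B F L)"
definition Xhat :: "nat \<Rightarrow> nat \<Rightarrow> nat \<Rightarrow> real mat \<Rightarrow> real mat \<Rightarrow> real mat \<Rightarrow> real mat \<Rightarrow> real mat \<Rightarrow> real mat \<Rightarrow> real mat" where
  "Xhat n m s A B C D F L = blk_toeplitz s (s + n) (int n) m m (Xhk m A B C D F L)"

definition Rk :: "nat \<Rightarrow> real mat \<Rightarrow> real mat \<Rightarrow> real mat \<Rightarrow> real mat \<Rightarrow> int \<Rightarrow> real mat" where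
  "Rk m A C L1 L2 k = (if k \<ge> 1 then C * (A - L2 * C) ^\<^sub>m nat (k - 1) * (L1 - L2)
                       else if k = 0 then 1\<^sub>m m else 0\<^sub>m m m)"
definition Rbk :: "nat \<Rightarrow> nat \<Rightarrow> real mat \<Rightarrow> real mat \<Rightarrow> real mat \<Rightarrow> real mat \<Rightarrow> real mat \<Rightarrow> real mat \<Rightarrow> real mat \<Rightarrow> int \<Rightarrow> real mat" where
  "Rbk m p A B C F1 F2 L1 L2 k = (if k \<ge> 1 then
       (F1 - F2) * AF A B F1 ^\<^sub>m nat (k - 1) * L1 + F2 * (A - L2 * C) ^\<^sub>m nat (k - 1) * (L1 - L2)
     else 0\<^sub>m p m)"

end

theory Submission
  imports Defs
begin

lemma pow_mat_Suc_left:
  assumes "A \<in> carrier_mat n n"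
  shows "A ^\<^sub>m Suc k = A * A ^\<^sub>m k"
proof (induction k)
  case 0 then show ?case using assms by simp
next
  case (Suc k)
  have "A ^\<^sub>m Suc (Suc k) = (A * A ^\<^sub>m k) * A" using Suc by simp
  also have "\<dots> = A * (A ^\<^sub>m k * A)" using assoc_mult_mat[OF assms pow_carrier_mat[OF assms] assms] .
  finally show ?case by simp
qed

lemma blk_dim[simp]:
  "dim_row (blk_toeplitz nr nc off r c f) = nr * r"
  "dim_col (blk_toeplitz nr nc off r c f) = nc * c"
  "blk_toeplitz nr nc off r c f \<in> carrier_mat (nr * r) (nc * c)"
  unfolding blk_toeplitz_def by auto

lemma blk_mult:
  assumes f: "\<And>k. f k \<in> carrier_mat r q" and g: "\<And>k. g k \<in> carrier_mat q c"
    and i: "i < nr * r" and j: "j < nc * c"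
  shows "(blk_toeplitz nr nk o1 r q f * blk_toeplitz nk nc o2 q c g) $$ (i,j) =
    (\<Sum>t<nk. (f (o1 + int (i div r) - int t) * g (o2 + int t - int (j div c))) $$ (i mod r, j mod c))"
proof -
  have r: "0 < r" using i by (cases r) auto
  have c: "0 < c" using j by (cases c) auto
  have "(blk_toeplitz nr nk o1 r q f * blk_toeplitz nk nc o2 q c g) $$ (i,j) =
     (\<Sum>x<nk*q. blk_toeplitz nr nk o1 r q f $$ (i,x) * blk_toeplitz nk nc o2 q c g $$ (x,j))"
    using i j by (simp add: scalar_prod_def atLeast0LessThan)
  also have "\<dots> = (\<Sum>t<nk. \<Sum>x\<in>{t*q..<t*q+q}. blk_toeplitz nr nk o1 r q f $$ (i,x) * blk_toeplitz nk nc o2 q c g $$ (x,j))"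
    by (rule sum.nat_group[symmetric])
  also have "\<dots> = (\<Sum>t<nk. (f (o1 + int (i div r) - int t) * g (o2 + int t - int (j div c))) $$ (i mod r, j mod c))"
  proof (rule sum.cong[OF refl])
    fix t assume t: "t \<in> {..<nk}"
    have "(\<Sum>x\<in>{t*q..<t*q+q}. blk_toeplitz nr nk o1 r q f $$ (i,x) * blk_toeplitz nk nc o2 q c g $$ (x,j))
       = (\<Sum>u\<in>{0..<q}. blk_toeplitz nr nk o1 r q f $$ (i,u + t*q) * blk_toeplitz nk nc o2 q c g $$ (u + t*q,j))"
      using sum.shift_bounds_nat_ivl[of _ 0 "t*q" q] by (simp add: add.commute)
    also have "\<dots> = (\<Sum>u\<in>{0..<q}. f (o1 + int (i div r) - int t) $$ (i mod r, u) * g (o2 + int t - int (j div c)) $$ (u, j mod c))"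
    proof (rule sum.cong[OF refl])
      fix u assume u: "u \<in> {0..<q}"
      have x0: "Suc t * q \<le> nk * q" using t by (intro mult_le_mono1) simp
      have x1: "u + t*q < nk * q" using x0 u by simp
      have q: "0 < q" using u by auto
      have d: "(u + t*q) div q = t" "(u + t*q) mod q = u" using u q by auto
      show "blk_toeplitz nr nk o1 r q f $$ (i,u + t*q) * blk_toeplitz nk nc o2 q c g $$ (u + t*q,j) =
            f (o1 + int (i div r) - int t) $$ (i mod r, u) * g (o2 + int t - int (j div c)) $$ (u, j mod c)"
        unfolding blk_toeplitz_def using i j x1 d by simp
    qed
    also have "\<dots> = (f (o1 + int (i div r) - int t) * g (o2 + int t - int (j div c))) $$ (i mod r, j mod c)"
    proof -
      have fx: "f (o1 + int (i div r) - int t) \<in> carrier_mat r q" by (rule f)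
      have gy: "g (o2 + int t - int (j div c)) \<in> carrier_mat q c" by (rule g)
      show ?thesis using fx gy r c by (simp add: scalar_prod_def)
    qed
    finally show "(\<Sum>x\<in>{t*q..<t*q+q}. blk_toeplitz nr nk o1 r q f $$ (i,x) * blk_toeplitz nk nc o2 q c g $$ (x,j))
       = (f (o1 + int (i div r) - int t) * g (o2 + int t - int (j div c))) $$ (i mod r, j mod c)" .
  qed
  finally show ?thesis .
qed


lemma fb_vstack:
  assumes "P1 \<in> carrier_mat r1 c1" "P2 \<in> carrier_mat r1 c2" "P3 \<in> carrier_mat r2 c1"
    "P4 \<in> carrier_mat r2 c2" "U \<in> carrier_mat c1 k" "V \<in> carrier_mat c2 k"
  shows "four_block_mat P1 P2 P3 P4 * vstack U V = vstack (P1*U + P2*V) (P3*U + P4*V)"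
proof -
  have "four_block_mat P1 P2 P3 P4 * vstack U V =
    four_block_mat (P1*U + P2*V) (P1 * 0\<^sub>m c1 0 + P2 * 0\<^sub>m c2 0) (P3*U + P4*V) (P3 * 0\<^sub>m c1 0 + P4 * 0\<^sub>m c2 0)"
  proof -
    have d: "dim_row U = c1" "dim_row V = c2" using assms by auto
    show ?thesis unfolding vstack_def d
      by (rule mult_four_block_mat[OF assms(1-4) assms(5) _ assms(6)]) auto
  qed
  also have "\<dots> = vstack (P1*U + P2*V) (P3*U + P4*V)"
    unfolding vstack_def using assms by (intro cong_four_block_mat refl eq_matI) auto
  finally show ?thesis .
qed

lemma sum_reduce:
  fixes h :: "int \<Rightarrow> int \<Rightarrow> real"
  assumes h1: "\<And>a b. a < 0 \<Longrightarrow> h a b = 0" and h2: "\<And>a b. b < 0 \<Longrightarrow> h a b = 0"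
    and "c < N" "jb < N"
  shows "(\<Sum>t<N. h (int c - int t) (int t - int jb)) =
    (if jb \<le> c then (\<Sum>b\<le>c-jb. h (int (c-jb) - int b) (int b)) else 0)"
proof -
  have "(\<Sum>t<N. h (int c - int t) (int t - int jb)) = (\<Sum>t\<in>{jb..c}. h (int c - int t) (int t - int jb))"
  proof (rule sum.mono_neutral_right)
    show "\<forall>t\<in>{..<N} - {jb..c}. h (int c - int t) (int t - int jb) = 0"
    proof
      fix t assume "t \<in> {..<N} - {jb..c}"
      then have "t < jb \<or> c < t" by auto
      then show "h (int c - int t) (int t - int jb) = 0" using h1 h2 by auto
    qed
  qed (use assms in auto)
  also have "\<dots> = (if jb \<le> c then (\<Sum>b\<le>c-jb. h (int (c-jb) - int b) (int b)) else 0)"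
  proof (cases "jb \<le> c")
    case True
    have "(\<Sum>t\<in>{jb..c}. h (int c - int t) (int t - int jb)) = (\<Sum>t\<in>{0+jb..(c-jb)+jb}. h (int c - int t) (int t - int jb))"
      using True by simp
    also have "\<dots> = (\<Sum>b\<in>{0..c-jb}. h (int c - int (b+jb)) (int (b+jb) - int jb))"
      by (rule sum.shift_bounds_cl_nat_ivl)
    also have "\<dots> = (\<Sum>b\<le>c-jb. h (int (c-jb) - int b) (int b))"
      using True by (intro sum.cong) (auto simp: of_nat_diff diff_diff_eq add.commute)
    finally show ?thesis using True by simp
  qed simp
  finally show ?thesis .
qed


lemma lin6:
  fixes a1 b1 b2 a2 c2 d2 :: "real mat"
  assumes "a1 \<in> carrier_mat r c" "b1 \<in> carrier_mat r c" "b2 \<in> carrier_mat r c"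
    "a2 \<in> carrier_mat r c" "c2 \<in> carrier_mat r c" "d2 \<in> carrier_mat r c"
  shows "(a1 + b2 - (a2 + c2)) + ((b1 - b2 + c2) + d2) = (a1 + b1) - (a2 - d2)"
  using assms by (intro eq_matI) simp_all

lemma assemble:
  fixes f1 g1 f2 g2 fY :: "int \<Rightarrow> real mat"
  assumes cf1: "\<And>k. f1 k \<in> carrier_mat r q1" and cg1: "\<And>k. g1 k \<in> carrier_mat q1 c"
    and cf2: "\<And>k. f2 k \<in> carrier_mat r q2" and cg2: "\<And>k. g2 k \<in> carrier_mat q2 c"
    and z1: "\<And>a. a < 0 \<Longrightarrow> f1 a = 0\<^sub>m r q1" and z2: "\<And>a. a < 0 \<Longrightarrow> f2 a = 0\<^sub>m r q2"
    and z3: "\<And>b. b < 0 \<Longrightarrow> g1 b = 0\<^sub>m q1 c" and z4: "\<And>b. b < 0 \<Longrightarrow> g2 b = 0\<^sub>m q2 c"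
    and z5: "\<And>a. a < 0 \<Longrightarrow> fY a = 0\<^sub>m r c"
    and core: "\<And>K ii jj. ii < r \<Longrightarrow> jj < c \<Longrightarrow>
       (\<Sum>b\<le>K. (f1 (int K - int b) * g1 (int b)) $$ (ii,jj) + (f2 (int K - int b) * g2 (int b)) $$ (ii,jj))
        = fY (int K) $$ (ii,jj)"
  shows "blk_toeplitz s (s+n) (int n) r c fY =
    blk_toeplitz s (s+n) (int n) r q1 f1 * blk_toeplitz (s+n) (s+n) 0 q1 c g1
    + blk_toeplitz s (s+n) (int n) r q2 f2 * blk_toeplitz (s+n) (s+n) 0 q2 c g2"
proof (rule eq_matI)
  show "dim_row (blk_toeplitz s (s+n) (int n) r c fY) =
    dim_row (blk_toeplitz s (s+n) (int n) r q1 f1 * blk_toeplitz (s+n) (s+n) 0 q1 c g1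
    + blk_toeplitz s (s+n) (int n) r q2 f2 * blk_toeplitz (s+n) (s+n) 0 q2 c g2)" by simp
  show "dim_col (blk_toeplitz s (s+n) (int n) r c fY) =
    dim_col (blk_toeplitz s (s+n) (int n) r q1 f1 * blk_toeplitz (s+n) (s+n) 0 q1 c g1
    + blk_toeplitz s (s+n) (int n) r q2 f2 * blk_toeplitz (s+n) (s+n) 0 q2 c g2)" by simp
  fix i j assume i: "i < dim_row (blk_toeplitz s (s+n) (int n) r q1 f1 * blk_toeplitz (s+n) (s+n) 0 q1 c g1
    + blk_toeplitz s (s+n) (int n) r q2 f2 * blk_toeplitz (s+n) (s+n) 0 q2 c g2)"
    and j: "j < dim_col (blk_toeplitz s (s+n) (int n) r q1 f1 * blk_toeplitz (s+n) (s+n) 0 q1 c g1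
    + blk_toeplitz s (s+n) (int n) r q2 f2 * blk_toeplitz (s+n) (s+n) 0 q2 c g2)"
  then have i: "i < s * r" and j: "j < (s+n) * c" by simp_all
  have r0: "0 < r" using i by (cases r) auto
  have c0: "0 < c" using j by (cases c) auto
  define ii where "ii = i mod r"
  define jj where "jj = j mod c"
  define l where "l = i div r"
  define jb where "jb = j div c"
  have ii: "ii < r" and jj: "jj < c" unfolding ii_def jj_def using r0 c0 by simp_all
  have l: "l < s" unfolding l_def using i by (simp add: less_mult_imp_div_less)
  have jb: "jb < s + n" unfolding jb_def using j by (simp add: less_mult_imp_div_less)
  define h where "h = (\<lambda>a b. (f1 a * g1 b) $$ (ii,jj) + (f2 a * g2 b) $$ (ii,jj))"
  have h1: "h a b = 0" if "a < 0" for a b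
    unfolding h_def using z1[OF that] z2[OF that] cg1[of b] cg2[of b] ii jj by simp
  have h2: "h a b = 0" if "b < 0" for a b
    unfolding h_def using z3[OF that] z4[OF that] cf1[of a] cf2[of a] ii jj by simp
  have "(blk_toeplitz s (s+n) (int n) r q1 f1 * blk_toeplitz (s+n) (s+n) 0 q1 c g1
    + blk_toeplitz s (s+n) (int n) r q2 f2 * blk_toeplitz (s+n) (s+n) 0 q2 c g2) $$ (i,j)
    = (blk_toeplitz s (s+n) (int n) r q1 f1 * blk_toeplitz (s+n) (s+n) 0 q1 c g1) $$ (i,j)
    + (blk_toeplitz s (s+n) (int n) r q2 f2 * blk_toeplitz (s+n) (s+n) 0 q2 c g2) $$ (i,j)"
    using i j by simp
  also have "\<dots> = (\<Sum>t<s+n. h (int (n + l) - int t) (int t - int jb))"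
    unfolding blk_mult[OF cf1 cg1 i j] blk_mult[OF cf2 cg2 i j] sum.distrib[symmetric]
    by (rule sum.cong) (simp_all add: h_def ii_def jj_def l_def jb_def)
  also have "\<dots> = (if jb \<le> n + l then (\<Sum>b\<le>n + l - jb. h (int (n + l - jb) - int b) (int b)) else 0)"
    by (rule sum_reduce[OF h1 h2]) (use l jb in auto)
  also have "\<dots> = blk_toeplitz s (s+n) (int n) r c fY $$ (i,j)"
  proof (cases "jb \<le> n + l")
    case True
    have e: "int (n + l - jb) = int n + int l - int jb" using True by simp
    show ?thesis using True core[OF ii jj, of "n + l - jb"] i j
      unfolding h_def blk_toeplitz_def e ii_def jj_def l_def jb_def by simp
  next
    case False
    then have "int n + int l - int jb < 0" by simp
    then show ?thesis using False i j z5 ii jj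
      unfolding blk_toeplitz_def ii_def jj_def l_def jb_def by simp
  qed
  finally show "blk_toeplitz s (s+n) (int n) r c fY $$ (i,j) =
    (blk_toeplitz s (s+n) (int n) r q1 f1 * blk_toeplitz (s+n) (s+n) 0 q1 c g1
    + blk_toeplitz s (s+n) (int n) r q2 f2 * blk_toeplitz (s+n) (s+n) 0 q2 c g2) $$ (i,j)" by simp
qed

definition Xc :: "nat \<Rightarrow> nat \<Rightarrow> real mat \<Rightarrow> real mat \<Rightarrow> real mat \<Rightarrow> real mat \<Rightarrow> real mat \<Rightarrow> real mat \<Rightarrow> nat \<Rightarrow> real mat" where
  "Xc n m A B C F1 L1 L2 K = (if K = 0 then 0\<^sub>m n m else
     AF A B F1 ^\<^sub>m (K - 1) * L1 - (A - L2 * C) ^\<^sub>m (K - 1) * (L1 - L2))"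

definition Wb :: "nat \<Rightarrow> nat \<Rightarrow> real mat \<Rightarrow> real mat \<Rightarrow> real mat \<Rightarrow> real mat \<Rightarrow> real mat \<Rightarrow> real mat \<Rightarrow> real mat \<Rightarrow> nat \<Rightarrow> real mat" where
  "Wb m p A B C F1 F2 L1 L2 b = B * Rbk m p A B C F1 F2 L1 L2 (int b) + L2 * Rk m A C L1 L2 (int b)"

context
  fixes n m p :: nat and A B C D F1 F2 L1 L2 :: "real mat"
  assumes cA: "A \<in> carrier_mat n n" and cB: "B \<in> carrier_mat n p"
    and cC: "C \<in> carrier_mat m n" and cD: "D \<in> carrier_mat m p"
    and cF1: "F1 \<in> carrier_mat p n" and cF2: "F2 \<in> carrier_mat p n"
    and cL1: "L1 \<in> carrier_mat n m" and cL2: "L2 \<in> carrier_mat n m"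
begin

lemma cAF: "F \<in> carrier_mat p n \<Longrightarrow> AF A B F \<in> carrier_mat n n"
  unfolding AF_def using cA cB by simp
lemma cCF: "F \<in> carrier_mat p n \<Longrightarrow> CF C D F \<in> carrier_mat m n"
  unfolding CF_def using cC cD by simp
lemma cAL: "A - L2 * C \<in> carrier_mat n n"
  by (rule minus_carrier_mat[OF mult_carrier_mat[OF cL2 cC]])
lemma cdL: "L1 - L2 \<in> carrier_mat n m" by (rule minus_carrier_mat[OF cL2])
lemma cdF: "F1 - F2 \<in> carrier_mat p n" by (rule minus_carrier_mat[OF cF2])

lemma cMk: assumes "F \<in> carrier_mat p n" shows "Mk p A B F k \<in> carrier_mat p p"
  unfolding Mk_def
  using mult_carrier_mat[OF mult_carrier_mat[OF assms pow_carrier_mat[OF cAF[OF assms]]] cB] by simp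
lemma cNk: assumes "F \<in> carrier_mat p n" shows "Nk m p A B C D F k \<in> carrier_mat m p"
  unfolding Nk_def
  using mult_carrier_mat[OF mult_carrier_mat[OF cCF[OF assms] pow_carrier_mat[OF cAF[OF assms]]] cB] cD by simp
lemma cYhk: assumes "F \<in> carrier_mat p n" "L \<in> carrier_mat n m" shows "Yhk m p A B F L k \<in> carrier_mat p m"
  unfolding Yhk_def
  using mult_carrier_mat[OF mult_carrier_mat[OF assms(1) pow_carrier_mat[OF cAF[OF assms(1)]]] assms(2)] by simp
lemma cXhk: assumes "F \<in> carrier_mat p n" "L \<in> carrier_mat n m" shows "Xhk m A B C D F L k \<in> carrier_mat m m"
  unfolding Xhk_def
  using mult_carrier_mat[OF mult_carrier_mat[OF cCF[OF assms(1)] pow_carrier_mat[OF cAF[OF assms(1)]]] assms(2)] by simp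
lemma cRk: "Rk m A C L1 L2 k \<in> carrier_mat m m"
  unfolding Rk_def
  using mult_carrier_mat[OF mult_carrier_mat[OF cC pow_carrier_mat[OF cAL]] cdL] by simp
lemma cRbk: "Rbk m p A B C F1 F2 L1 L2 k \<in> carrier_mat p m"
  unfolding Rbk_def
  using mult_carrier_mat[OF mult_carrier_mat[OF cdF pow_carrier_mat[OF cAF[OF cF1]]] cL1]
    mult_carrier_mat[OF mult_carrier_mat[OF cF2 pow_carrier_mat[OF cAL]] cdL] by simp
lemma cXc: "Xc n m A B C F1 L1 L2 K \<in> carrier_mat n m"
  unfolding Xc_def
  using minus_carrier_mat[OF mult_carrier_mat[OF pow_carrier_mat[OF cAL] cdL]] by simp
lemma cWb: "Wb m p A B C F1 F2 L1 L2 b \<in> carrier_mat n m"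
  unfolding Wb_def using mult_carrier_mat[OF cB cRbk] mult_carrier_mat[OF cL2 cRk] by simp

lemma Xc_step:
  "AF A B F2 * Xc n m A B C F1 L1 L2 K + Wb m p A B C F1 F2 L1 L2 K = Xc n m A B C F1 L1 L2 (Suc K)"
proof (cases K)
  case 0
  show ?thesis unfolding 0 Xc_def Wb_def Rk_def Rbk_def
    using cAF[OF cF2] cAF[OF cF1] cAL cB cL1 cL2 by (intro eq_matI) auto
next
  case (Suc k)
  define A1 where "A1 = AF A B F1"
  define A2 where "A2 = AF A B F2"
  define AL where "AL = A - L2 * C"
  define P where "P = A1 ^\<^sub>m k"
  define Q where "Q = AL ^\<^sub>m k"
  define X1 where "X1 = P * L1"
  define X2 where "X2 = Q * (L1 - L2)"
  have cA1: "A1 \<in> carrier_mat n n" unfolding A1_def by (rule cAF[OF cF1])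
  have cA2: "A2 \<in> carrier_mat n n" unfolding A2_def by (rule cAF[OF cF2])
  have cAL': "AL \<in> carrier_mat n n" unfolding AL_def by (rule cAL)
  have cP: "P \<in> carrier_mat n n" unfolding P_def using cA1 by simp
  have cQ: "Q \<in> carrier_mat n n" unfolding Q_def using cAL' by simp
    have cX1: "X1 \<in> carrier_mat n m" unfolding X1_def using cP cL1 by simp
  have cX2: "X2 \<in> carrier_mat n m" unfolding X2_def using cQ cdL by simp
  have nk: "nat (int (Suc k) - 1) = k" by simp
  have W: "Wb m p A B C F1 F2 L1 L2 K = B * (F1 * X1 - F2 * X1 + F2 * X2) + (L2 * C) * X2"
  proof -
    have "Rbk m p A B C F1 F2 L1 L2 (int K) = (F1 - F2) * P * L1 + F2 * Q * (L1 - L2)"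
      unfolding Rbk_def Suc P_def Q_def A1_def AL_def by simp
    also have "\<dots> = F1 * X1 - F2 * X1 + F2 * X2"
      unfolding X1_def X2_def using cF1 cF2 cP cQ cL1 cdL
      by (simp add: minus_mult_distrib_mat[of F1 p n F2 P n] minus_mult_distrib_mat[of "F1*P" p n "F2*P" L1 m])
    finally have 1: "Rbk m p A B C F1 F2 L1 L2 (int K) = F1 * X1 - F2 * X1 + F2 * X2" .
    have "Rk m A C L1 L2 (int K) = C * Q * (L1 - L2)"
      unfolding Rk_def Suc Q_def AL_def by simp
    also have "\<dots> = C * X2" unfolding X2_def using cC cQ cdL by simp
    finally have 2: "Rk m A C L1 L2 (int K) = C * X2" .
    show ?thesis unfolding Wb_def 1 2 using cL2 cC cX2 by simp
  qed
  have X: "Xc n m A B C F1 L1 L2 K = X1 - X2"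
    unfolding Xc_def Suc X1_def X2_def P_def Q_def A1_def AL_def by simp
  have X': "Xc n m A B C F1 L1 L2 (Suc K) = A1 * X1 - AL * X2"
  proof -
    have "Xc n m A B C F1 L1 L2 (Suc K) = A1 ^\<^sub>m Suc k * L1 - AL ^\<^sub>m Suc k * (L1 - L2)"
      unfolding Xc_def Suc A1_def AL_def by simp
    also have "\<dots> = (A1 * P) * L1 - (AL * Q) * (L1 - L2)"
      unfolding P_def Q_def using pow_mat_Suc_left[OF cA1] pow_mat_Suc_left[OF cAL'] by simp
    also have "\<dots> = A1 * X1 - AL * X2"
      unfolding X1_def X2_def using cA1 cP cL1 cAL' cQ cdL by simp
    finally show ?thesis .
  qed
  have e1: "A2 * (X1 - X2) = A * X1 + B * (F2 * X1) - (A * X2 + B * (F2 * X2))"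
  proof -
    have "A2 * (X1 - X2) = A2 * X1 - A2 * X2" using cA2 cX1 cX2 by (simp add: mult_minus_distrib_mat)
    moreover have "A2 * X1 = A * X1 + B * (F2 * X1)"
      unfolding A2_def AF_def using cA cB cF2 cX1 by (simp add: add_mult_distrib_mat[of A n n "B * F2"])
    moreover have "A2 * X2 = A * X2 + B * (F2 * X2)"
      unfolding A2_def AF_def using cA cB cF2 cX2 by (simp add: add_mult_distrib_mat[of A n n "B * F2"])
    ultimately show ?thesis by simp
  qed
  have e2: "B * (F1 * X1 - F2 * X1 + F2 * X2) = B * (F1 * X1) - B * (F2 * X1) + B * (F2 * X2)"
  proof -
    have c1: "F1 * X1 \<in> carrier_mat p m" "F2 * X1 \<in> carrier_mat p m" "F2 * X2 \<in> carrier_mat p m"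
      using cF1 cF2 cX1 cX2 by auto
    have "B * (F1 * X1 - F2 * X1 + F2 * X2) = B * (F1 * X1 - F2 * X1) + B * (F2 * X2)"
      by (rule mult_add_distrib_mat[OF cB minus_carrier_mat[OF c1(2)] c1(3)])
    also have "B * (F1 * X1 - F2 * X1) = B * (F1 * X1) - B * (F2 * X1)"
      by (rule mult_minus_distrib_mat[OF cB c1(1) c1(2)])
    finally show ?thesis .
  qed
  have e3: "A1 * X1 = A * X1 + B * (F1 * X1)"
    unfolding A1_def AF_def using cA cB cF1 cX1 by (simp add: add_mult_distrib_mat[of A n n "B * F1"])
  have e4: "AL * X2 = A * X2 - (L2 * C) * X2"
    unfolding AL_def using cA cL2 cC cX2 by (simp add: minus_mult_distrib_mat[of A n n "L2 * C"])
  show ?thesis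
    unfolding X X' W A2_def[symmetric] e1 e2 e3 e4
    by (rule lin6) (use cA cB cF1 cF2 cX1 cX2 cL2 cC in auto)
qed


lemma G_lem:
  assumes "G \<in> carrier_mat q n" "i < q" "j < m"
  shows "(\<Sum>b<K. (G * AF A B F2 ^\<^sub>m (K - 1 - b) * Wb m p A B C F1 F2 L1 L2 b) $$ (i,j)) =
         (G * Xc n m A B C F1 L1 L2 K) $$ (i,j)"
  using assms
proof (induction K arbitrary: G)
  case 0
  then show ?case by (simp add: Xc_def)
next
  case (Suc K)
  define A2 where "A2 = AF A B F2"
  define W where "W = Wb m p A B C F1 F2 L1 L2"
  define X where "X = Xc n m A B C F1 L1 L2"
  have cA2: "A2 \<in> carrier_mat n n" unfolding A2_def by (rule cAF[OF cF2])
  have cG: "G \<in> carrier_mat q n" by fact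
  have cGA: "G * A2 \<in> carrier_mat q n" using cG cA2 by simp
  have cW: "\<And>b. W b \<in> carrier_mat n m" unfolding W_def by (rule cWb)
  have cX: "\<And>b. X b \<in> carrier_mat n m" unfolding X_def by (rule cXc)
  have "(\<Sum>b<Suc K. (G * A2 ^\<^sub>m (Suc K - 1 - b) * W b) $$ (i,j)) =
        (\<Sum>b<K. (G * A2 ^\<^sub>m (Suc K - 1 - b) * W b) $$ (i,j)) + (G * A2 ^\<^sub>m 0 * W K) $$ (i,j)"
    by simp
  also have "(\<Sum>b<K. (G * A2 ^\<^sub>m (Suc K - 1 - b) * W b) $$ (i,j)) =
             (\<Sum>b<K. ((G * A2) * A2 ^\<^sub>m (K - 1 - b) * W b) $$ (i,j))"
  proof (rule sum.cong[OF refl])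
    fix b assume "b \<in> {..<K}"
    then have e: "Suc K - 1 - b = Suc (K - 1 - b)" by auto
    have "G * A2 ^\<^sub>m (Suc K - 1 - b) = G * (A2 * A2 ^\<^sub>m (K - 1 - b))"
      unfolding e pow_mat_Suc_left[OF cA2] ..
    also have "\<dots> = (G * A2) * A2 ^\<^sub>m (K - 1 - b)"
      using assoc_mult_mat[OF cG cA2 pow_carrier_mat[OF cA2]] by simp
    finally show "(G * A2 ^\<^sub>m (Suc K - 1 - b) * W b) $$ (i,j) = ((G * A2) * A2 ^\<^sub>m (K - 1 - b) * W b) $$ (i,j)"
      by simp
  qed
  also have "\<dots> = ((G * A2) * X K) $$ (i,j)"
    unfolding A2_def W_def X_def using Suc.IH[OF cGA[unfolded A2_def] Suc.prems(2,3)] .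
  also have "(G * A2 ^\<^sub>m 0 * W K) $$ (i,j) = (G * W K) $$ (i,j)"
    using cG cA2 by simp
  also have "((G * A2) * X K) $$ (i,j) + (G * W K) $$ (i,j) = (G * ((A2 * X K) + W K)) $$ (i,j)"
  proof -
    have h1: "G * ((A2 * X K) + W K) = G * (A2 * X K) + G * W K"
      by (rule mult_add_distrib_mat[OF cG mult_carrier_mat[OF cA2 cX] cW])
    have h2: "G * (A2 * X K) = (G * A2) * X K"
      using assoc_mult_mat[OF cG cA2 cX] by simp
    have h3: "(G * (A2 * X K) + G * W K) $$ (i,j) = (G * (A2 * X K)) $$ (i,j) + (G * W K) $$ (i,j)"
      using cG cA2 cX[of K] cW[of K] Suc.prems by simp
    show ?thesis by (subst h1, subst h3, subst h2, rule refl)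
  qed
  also have "A2 * X K + W K = X (Suc K)"
    unfolding A2_def X_def W_def by (rule Xc_step)
  finally show ?case unfolding A2_def W_def X_def .
qed


lemma comb:
  assumes cG: "G \<in> carrier_mat q n" and cP: "P \<in> carrier_mat n n" and ij: "i < q" "j < m"
    and bb: "b' = int b"
  shows "(G * P * B * Rbk m p A B C F1 F2 L1 L2 b') $$ (i,j) + (G * P * L2 * Rk m A C L1 L2 b') $$ (i,j)
     = (G * P * Wb m p A B C F1 F2 L1 L2 b) $$ (i,j)"
proof -
  define Rb where "Rb = Rbk m p A B C F1 F2 L1 L2 b'"
  define R where "R = Rk m A C L1 L2 b'"
  have cRb: "Rb \<in> carrier_mat p m" unfolding Rb_def by (rule cRbk)
  have cR: "R \<in> carrier_mat m m" unfolding R_def by (rule cRk)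
  have cGP: "G * P \<in> carrier_mat q n" using cG cP by simp
  have W: "Wb m p A B C F1 F2 L1 L2 b = B * Rb + L2 * R" unfolding Wb_def Rb_def R_def bb ..
  have h1: "G * P * (B * Rb + L2 * R) = G * P * (B * Rb) + G * P * (L2 * R)"
    by (rule mult_add_distrib_mat[OF cGP mult_carrier_mat[OF cB cRb] mult_carrier_mat[OF cL2 cR]])
  have h2: "G * P * B * Rb = G * P * (B * Rb)" by (rule assoc_mult_mat[OF cGP cB cRb])
  have h3: "G * P * L2 * R = G * P * (L2 * R)" by (rule assoc_mult_mat[OF cGP cL2 cR])
  have h4: "(G * P * (B * Rb) + G * P * (L2 * R)) $$ (i,j) = (G * P * (B * Rb)) $$ (i,j) + (G * P * (L2 * R)) $$ (i,j)"
    using cG cP cGP cB cRb cL2 cR ij by simp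
  show ?thesis unfolding Rb_def[symmetric] R_def[symmetric] W
    by (subst h1, subst h4, subst h2, subst h3, rule refl)
qed

lemma Rbk_Suc: "Rbk m p A B C F1 F2 L1 L2 (int (Suc k)) =
   F1 * (AF A B F1 ^\<^sub>m k * L1) - F2 * (AF A B F1 ^\<^sub>m k * L1) + F2 * ((A - L2 * C) ^\<^sub>m k * (L1 - L2))"
proof -
  define P where "P = AF A B F1 ^\<^sub>m k"
  define Q where "Q = (A - L2 * C) ^\<^sub>m k"
  have cP: "P \<in> carrier_mat n n" unfolding P_def using cAF[OF cF1] by simp
  have cQ: "Q \<in> carrier_mat n n" unfolding Q_def using cAL by simp
  have "Rbk m p A B C F1 F2 L1 L2 (int (Suc k)) = (F1 - F2) * P * L1 + F2 * Q * (L1 - L2)"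
    unfolding Rbk_def P_def Q_def by simp
  also have "\<dots> = F1 * (P * L1) - F2 * (P * L1) + F2 * (Q * (L1 - L2))"
    using cF1 cF2 cP cQ cL1 cdL
    by (simp add: minus_mult_distrib_mat[of F1 p n F2 P n] minus_mult_distrib_mat[of "F1*P" p n "F2*P" L1 m])
  finally show ?thesis unfolding P_def Q_def .
qed

lemma Rk_Suc: "Rk m A C L1 L2 (int (Suc k)) = C * ((A - L2 * C) ^\<^sub>m k * (L1 - L2))"
  unfolding Rk_def by (simp add: assoc_mult_mat[OF cC pow_carrier_mat[OF cAL] cdL])

lemma Xc_Suc: "Xc n m A B C F1 L1 L2 (Suc k) = AF A B F1 ^\<^sub>m k * L1 - (A - L2 * C) ^\<^sub>m k * (L1 - L2)"
  unfolding Xc_def by simp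

lemma lower_terms:
  assumes cG: "G \<in> carrier_mat q n" and ij: "i < q" "j < m"
    and hb: "\<And>b. b \<le> k \<Longrightarrow> h b = (G * AF A B F2 ^\<^sub>m (k - b) * B * Rbk m p A B C F1 F2 L1 L2 (int b)) $$ (i,j)
        + (G * AF A B F2 ^\<^sub>m (k - b) * L2 * Rk m A C L1 L2 (int b)) $$ (i,j)"
  shows "(\<Sum>b\<le>k. h b) = (G * Xc n m A B C F1 L1 L2 (Suc k)) $$ (i,j)"
proof -
  have "(\<Sum>b\<le>k. h b) = (\<Sum>b<Suc k. (G * AF A B F2 ^\<^sub>m (Suc k - 1 - b) * Wb m p A B C F1 F2 L1 L2 b) $$ (i,j))"
    unfolding lessThan_Suc_atMost
  proof (rule sum.cong[OF refl])
    fix b assume "b \<in> {..k}"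
    then have b: "b \<le> k" by simp
    show "h b = (G * AF A B F2 ^\<^sub>m (Suc k - 1 - b) * Wb m p A B C F1 F2 L1 L2 b) $$ (i,j)"
      unfolding hb[OF b] using comb[OF cG pow_carrier_mat[OF cAF[OF cF2]] ij refl] by simp
  qed
  also have "\<dots> = (G * Xc n m A B C F1 L1 L2 (Suc k)) $$ (i,j)"
    by (rule G_lem[OF cG ij])
  finally show ?thesis .
qed

lemma core_top:
  assumes ij: "i < p" "j < m"
  shows "(\<Sum>b\<le>K. (Mk p A B F2 (int K - int b) * Rbk m p A B C F1 F2 L1 L2 (int b)) $$ (i,j)
      + (Yhk m p A B F2 L2 (int K - int b) * Rk m A C L1 L2 (int b)) $$ (i,j))
    = Yhk m p A B F1 L1 (int K) $$ (i,j)"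
proof (cases K)
  case 0
  then show ?thesis using ij by (simp add: Mk_def Yhk_def Rbk_def Rk_def)
next
  case (Suc k)
  define Y1 where "Y1 = AF A B F1 ^\<^sub>m k * L1"
  define Y2 where "Y2 = (A - L2 * C) ^\<^sub>m k * (L1 - L2)"
  have cY1: "Y1 \<in> carrier_mat n m" unfolding Y1_def by (rule mult_carrier_mat[OF pow_carrier_mat[OF cAF[OF cF1]] cL1])
  have cY2: "Y2 \<in> carrier_mat n m" unfolding Y2_def by (rule mult_carrier_mat[OF pow_carrier_mat[OF cAL] cdL])
  have low: "(\<Sum>b\<le>k. (Mk p A B F2 (int K - int b) * Rbk m p A B C F1 F2 L1 L2 (int b)) $$ (i,j)
      + (Yhk m p A B F2 L2 (int K - int b) * Rk m A C L1 L2 (int b)) $$ (i,j))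
     = (F2 * Xc n m A B C F1 L1 L2 (Suc k)) $$ (i,j)"
  proof (rule lower_terms[OF cF2 ij])
    fix b assume b: "b \<le> k"
    have e: "nat (int K - int b - 1) = k - b" "1 \<le> int K - int b" using b Suc by auto
    show "(Mk p A B F2 (int K - int b) * Rbk m p A B C F1 F2 L1 L2 (int b)) $$ (i,j)
      + (Yhk m p A B F2 L2 (int K - int b) * Rk m A C L1 L2 (int b)) $$ (i,j) =
      (F2 * AF A B F2 ^\<^sub>m (k - b) * B * Rbk m p A B C F1 F2 L1 L2 (int b)) $$ (i,j)
        + (F2 * AF A B F2 ^\<^sub>m (k - b) * L2 * Rk m A C L1 L2 (int b)) $$ (i,j)"
      unfolding Mk_def Yhk_def using e by simp
  qed
  have top: "(Mk p A B F2 (int K - int K) * Rbk m p A B C F1 F2 L1 L2 (int K)) $$ (i,j)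
      + (Yhk m p A B F2 L2 (int K - int K) * Rk m A C L1 L2 (int K)) $$ (i,j)
      = (F1 * Y1 - F2 * Y1 + F2 * Y2) $$ (i,j)"
    unfolding Mk_def Yhk_def Suc Rbk_Suc Y1_def Y2_def using cF1 cF2 cY1[unfolded Y1_def] cY2[unfolded Y2_def] cRk[of "1 + int k"] ij by simp
  have X: "(F2 * Xc n m A B C F1 L1 L2 (Suc k)) $$ (i,j) = (F2 * Y1) $$ (i,j) - (F2 * Y2) $$ (i,j)"
  proof -
    have "F2 * Xc n m A B C F1 L1 L2 (Suc k) = F2 * Y1 - F2 * Y2"
      unfolding Xc_Suc Y1_def[symmetric] Y2_def[symmetric] by (rule mult_minus_distrib_mat[OF cF2 cY1 cY2])
    then show ?thesis using cF2 cY1 cY2 ij by simp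
  qed
  have R: "Yhk m p A B F1 L1 (int K) $$ (i,j) = (F1 * Y1) $$ (i,j)"
    unfolding Yhk_def Suc Y1_def by (simp add: assoc_mult_mat[OF cF1 pow_carrier_mat[OF cAF[OF cF1]] cL1])
  show ?thesis
    unfolding Suc sum.atMost_Suc using low[unfolded Suc] top[unfolded Suc] X R[unfolded Suc] cF1 cF2 cY1 cY2 ij
    by simp
qed

lemma core_bot:
  assumes ij: "i < m" "j < m"
  shows "(\<Sum>b\<le>K. (Nk m p A B C D F2 (int K - int b) * Rbk m p A B C F1 F2 L1 L2 (int b)) $$ (i,j)
      + (Xhk m A B C D F2 L2 (int K - int b) * Rk m A C L1 L2 (int b)) $$ (i,j))
    = Xhk m A B C D F1 L1 (int K) $$ (i,j)"
proof (cases K)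
  case 0
  then show ?thesis using ij cD by (simp add: Nk_def Xhk_def Rbk_def Rk_def)
next
  case (Suc k)
  define Y1 where "Y1 = AF A B F1 ^\<^sub>m k * L1"
  define Y2 where "Y2 = (A - L2 * C) ^\<^sub>m k * (L1 - L2)"
  have cY1: "Y1 \<in> carrier_mat n m" unfolding Y1_def by (rule mult_carrier_mat[OF pow_carrier_mat[OF cAF[OF cF1]] cL1])
  have cY2: "Y2 \<in> carrier_mat n m" unfolding Y2_def by (rule mult_carrier_mat[OF pow_carrier_mat[OF cAL] cdL])
  have cG: "CF C D F2 \<in> carrier_mat m n" by (rule cCF[OF cF2])
  have low: "(\<Sum>b\<le>k. (Nk m p A B C D F2 (int K - int b) * Rbk m p A B C F1 F2 L1 L2 (int b)) $$ (i,j)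
      + (Xhk m A B C D F2 L2 (int K - int b) * Rk m A C L1 L2 (int b)) $$ (i,j))
     = (CF C D F2 * Xc n m A B C F1 L1 L2 (Suc k)) $$ (i,j)"
  proof (rule lower_terms[OF cG ij])
    fix b assume b: "b \<le> k"
    have e: "nat (int K - int b - 1) = k - b" "1 \<le> int K - int b" using b Suc by auto
    show "(Nk m p A B C D F2 (int K - int b) * Rbk m p A B C F1 F2 L1 L2 (int b)) $$ (i,j)
      + (Xhk m A B C D F2 L2 (int K - int b) * Rk m A C L1 L2 (int b)) $$ (i,j) =
      (CF C D F2 * AF A B F2 ^\<^sub>m (k - b) * B * Rbk m p A B C F1 F2 L1 L2 (int b)) $$ (i,j)
        + (CF C D F2 * AF A B F2 ^\<^sub>m (k - b) * L2 * Rk m A C L1 L2 (int b)) $$ (i,j)"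
      unfolding Nk_def Xhk_def using e by simp
  qed
  define T1 where "T1 = D * (F1 * Y1)"
  define T2 where "T2 = D * (F2 * Y1)"
  define T3 where "T3 = D * (F2 * Y2)"
  define T4 where "T4 = C * Y1"
  define T5 where "T5 = C * Y2"
  have cT: "T1 \<in> carrier_mat m m" "T2 \<in> carrier_mat m m" "T3 \<in> carrier_mat m m"
     "T4 \<in> carrier_mat m m" "T5 \<in> carrier_mat m m"
    unfolding T1_def T2_def T3_def T4_def T5_def using cD cF1 cF2 cC cY1 cY2 by auto
  have top: "(Nk m p A B C D F2 (int K - int K) * Rbk m p A B C F1 F2 L1 L2 (int K)) $$ (i,j)
      + (Xhk m A B C D F2 L2 (int K - int K) * Rk m A C L1 L2 (int K)) $$ (i,j)
      = (T1 - T2 + T3) $$ (i,j) + T5 $$ (i,j)"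
  proof -
    have 1: "Nk m p A B C D F2 (int K - int K) = D" unfolding Nk_def by simp
    have 2: "Xhk m A B C D F2 L2 (int K - int K) = 1\<^sub>m m" unfolding Xhk_def by simp
    have cF1Y1: "F1 * Y1 \<in> carrier_mat p m" and cF2Y1: "F2 * Y1 \<in> carrier_mat p m"
      and cF2Y2: "F2 * Y2 \<in> carrier_mat p m" using cF1 cF2 cY1 cY2 by auto
    have 3: "D * (F1 * Y1 - F2 * Y1 + F2 * Y2) = T1 - T2 + T3"
      unfolding T1_def T2_def T3_def
      using mult_add_distrib_mat[OF cD minus_carrier_mat[OF cF2Y1] cF2Y2]
        mult_minus_distrib_mat[OF cD cF1Y1 cF2Y1] by simp
    have 4: "Rk m A C L1 L2 (int K) = T5" unfolding Suc Rk_Suc T5_def Y2_def ..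
    show ?thesis apply (subst 1, subst 2) unfolding Suc Rbk_Suc Y1_def[symmetric] Y2_def[symmetric] 3
      using 4[unfolded Suc] cT ij by simp
  qed
  have X: "CF C D F2 * Xc n m A B C F1 L1 L2 (Suc k) = T4 - T5 + T2 - T3"
  proof -
    have "CF C D F2 * Xc n m A B C F1 L1 L2 (Suc k) = CF C D F2 * Y1 - CF C D F2 * Y2"
      unfolding Xc_Suc Y1_def[symmetric] Y2_def[symmetric] by (rule mult_minus_distrib_mat[OF cG cY1 cY2])
    also have "CF C D F2 * Y1 = T4 + T2" unfolding CF_def T4_def T2_def
      using add_mult_distrib_mat[OF cC mult_carrier_mat[OF cD cF2] cY1] assoc_mult_mat[OF cD cF2 cY1] by simp
    also have "CF C D F2 * Y2 = T5 + T3" unfolding CF_def T5_def T3_def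
      using add_mult_distrib_mat[OF cC mult_carrier_mat[OF cD cF2] cY2] assoc_mult_mat[OF cD cF2 cY2] by simp
    finally show ?thesis using cT by (intro eq_matI) simp_all
  qed
  have R: "Xhk m A B C D F1 L1 (int K) = T4 + T1"
  proof -
    have "Xhk m A B C D F1 L1 (int K) = CF C D F1 * Y1"
      unfolding Xhk_def Suc Y1_def by (simp add: assoc_mult_mat[OF cCF[OF cF1] pow_carrier_mat[OF cAF[OF cF1]] cL1])
    also have "\<dots> = T4 + T1" unfolding CF_def T4_def T1_def
      using add_mult_distrib_mat[OF cC mult_carrier_mat[OF cD cF1] cY1] assoc_mult_mat[OF cD cF1 cY1] by simp
    finally show ?thesis .
  qed
  show ?thesis
    unfolding Suc sum.atMost_Suc using low[unfolded Suc] top[unfolded Suc] X R[unfolded Suc] cT ij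
    by simp
qed

end
theorem lemma5:
  fixes n m p s :: nat and A B C D F1 F2 L1 L2 :: "real mat"
  assumes "n \<ge> 1"
    and "minimal_realization n p m A B C D"
    and "F1 \<in> carrier_mat p n" and "F2 \<in> carrier_mat p n"
    and "L1 \<in> carrier_mat n m" and "L2 \<in> carrier_mat n m"
    and "s \<ge> 1"
  shows "vstack (Yhat n m p s A B F1 L1) (Xhat n m s A B C D F1 L1) =
         four_block_mat (Ms n p s A B F2) (Yhat n m p s A B F2 L2)
                        (Ns n m p s A B C D F2) (Xhat n m s A B C D F2 L2)
         * vstack (blk_toeplitz (s + n) (s + n) 0 p m (Rbk m p A B C F1 F2 L1 L2))
                  (blk_toeplitz (s + n) (s + n) 0 m m (Rk m A C L1 L2))"
  proof -
  note mr = assms(2)[unfolded minimal_realization_def]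
  have cA: "A \<in> carrier_mat n n" and cB: "B \<in> carrier_mat n p"
    and cC: "C \<in> carrier_mat m n" and cD: "D \<in> carrier_mat m p" using mr by auto
  note H = cA cB cC cD assms(3) assms(4) assms(5) assms(6)
  have top: "Yhat n m p s A B F1 L1 =
      Ms n p s A B F2 * blk_toeplitz (s + n) (s + n) 0 p m (Rbk m p A B C F1 F2 L1 L2)
      + Yhat n m p s A B F2 L2 * blk_toeplitz (s + n) (s + n) 0 m m (Rk m A C L1 L2)"
    unfolding Ms_def Yhat_def
  proof (rule assemble)
    show "\<And>k. Mk p A B F2 k \<in> carrier_mat p p" by (rule cMk[OF H assms(4)])
    show "\<And>k. Yhk m p A B F2 L2 k \<in> carrier_mat p m" by (rule cYhk[OF H assms(4) assms(6)])
    show "\<And>k. Rbk m p A B C F1 F2 L1 L2 k \<in> carrier_mat p m" by (rule cRbk[OF H])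
    show "\<And>k. Rk m A C L1 L2 k \<in> carrier_mat m m" by (rule cRk[OF H])
    show "\<And>a. a < 0 \<Longrightarrow> Mk p A B F2 a = 0\<^sub>m p p" by (simp add: Mk_def)
    show "\<And>a. a < 0 \<Longrightarrow> Yhk m p A B F2 L2 a = 0\<^sub>m p m" by (simp add: Yhk_def)
    show "\<And>a. a < 0 \<Longrightarrow> Yhk m p A B F1 L1 a = 0\<^sub>m p m" by (simp add: Yhk_def)
    show "\<And>a. a < 0 \<Longrightarrow> Rbk m p A B C F1 F2 L1 L2 a = 0\<^sub>m p m" by (simp add: Rbk_def)
    show "\<And>a. a < 0 \<Longrightarrow> Rk m A C L1 L2 a = 0\<^sub>m m m" by (simp add: Rk_def)
    show "\<And>K ii jj. ii < p \<Longrightarrow> jj < m \<Longrightarrow>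
       (\<Sum>b\<le>K. (Mk p A B F2 (int K - int b) * Rbk m p A B C F1 F2 L1 L2 (int b)) $$ (ii,jj)
          + (Yhk m p A B F2 L2 (int K - int b) * Rk m A C L1 L2 (int b)) $$ (ii,jj))
        = Yhk m p A B F1 L1 (int K) $$ (ii,jj)"
      by (rule core_top[OF H])
  qed
  have bot: "Xhat n m s A B C D F1 L1 =
      Ns n m p s A B C D F2 * blk_toeplitz (s + n) (s + n) 0 p m (Rbk m p A B C F1 F2 L1 L2)
      + Xhat n m s A B C D F2 L2 * blk_toeplitz (s + n) (s + n) 0 m m (Rk m A C L1 L2)"
    unfolding Ns_def Xhat_def
  proof (rule assemble)
    show "\<And>k. Nk m p A B C D F2 k \<in> carrier_mat m p" by (rule cNk[OF H assms(4)])
    show "\<And>k. Xhk m A B C D F2 L2 k \<in> carrier_mat m m" by (rule cXhk[OF H assms(4) assms(6)])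
    show "\<And>k. Rbk m p A B C F1 F2 L1 L2 k \<in> carrier_mat p m" by (rule cRbk[OF H])
    show "\<And>k. Rk m A C L1 L2 k \<in> carrier_mat m m" by (rule cRk[OF H])
    show "\<And>a. a < 0 \<Longrightarrow> Nk m p A B C D F2 a = 0\<^sub>m m p" by (simp add: Nk_def)
    show "\<And>a. a < 0 \<Longrightarrow> Xhk m A B C D F2 L2 a = 0\<^sub>m m m" by (simp add: Xhk_def)
    show "\<And>a. a < 0 \<Longrightarrow> Xhk m A B C D F1 L1 a = 0\<^sub>m m m" by (simp add: Xhk_def)
    show "\<And>a. a < 0 \<Longrightarrow> Rbk m p A B C F1 F2 L1 L2 a = 0\<^sub>m p m" by (simp add: Rbk_def)
    show "\<And>a. a < 0 \<Longrightarrow> Rk m A C L1 L2 a = 0\<^sub>m m m" by (simp add: Rk_def)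
    show "\<And>K ii jj. ii < m \<Longrightarrow> jj < m \<Longrightarrow>
       (\<Sum>b\<le>K. (Nk m p A B C D F2 (int K - int b) * Rbk m p A B C F1 F2 L1 L2 (int b)) $$ (ii,jj)
          + (Xhk m A B C D F2 L2 (int K - int b) * Rk m A C L1 L2 (int b)) $$ (ii,jj))
        = Xhk m A B C D F1 L1 (int K) $$ (ii,jj)"
      by (rule core_bot[OF H])
  qed
  have "four_block_mat (Ms n p s A B F2) (Yhat n m p s A B F2 L2)
                        (Ns n m p s A B C D F2) (Xhat n m s A B C D F2 L2)
         * vstack (blk_toeplitz (s + n) (s + n) 0 p m (Rbk m p A B C F1 F2 L1 L2))
                  (blk_toeplitz (s + n) (s + n) 0 m m (Rk m A C L1 L2))
     = vstack (Ms n p s A B F2 * blk_toeplitz (s + n) (s + n) 0 p m (Rbk m p A B C F1 F2 L1 L2)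
      + Yhat n m p s A B F2 L2 * blk_toeplitz (s + n) (s + n) 0 m m (Rk m A C L1 L2))
      (Ns n m p s A B C D F2 * blk_toeplitz (s + n) (s + n) 0 p m (Rbk m p A B C F1 F2 L1 L2)
      + Xhat n m s A B C D F2 L2 * blk_toeplitz (s + n) (s + n) 0 m m (Rk m A C L1 L2))"
    unfolding Ms_def Yhat_def Ns_def Xhat_def
    by (rule fb_vstack[OF blk_dim(3) blk_dim(3) blk_dim(3) blk_dim(3) blk_dim(3) blk_dim(3)])
  then show ?thesis using top bot by simp
qed

end
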